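(* Let $F$ be a field of characteristic zero, $n,m$ natural numbers, and $l\in W(n,m)$ a nonzero element. Then the ideal of $W(n,m)$ generated by $l$ contains a nonzero element $l'$ such that in every basis element $e^{\alpha}x^{\beta}\partial_p$ occurring in $l'$ with nonzero coefficient, all components of $\beta$ are positive integers.
   Context: $W(n,m)$ has basis $e^{\alpha}x^{\beta}\partial_i$ ($\alpha\in\mathbb Z^n$, $\beta\in\mathbb Z^{n+m}$, $1\le i\le n+m$), realized as vector fields $f\partial_i$ with $f$ in the commutative algebra with basis $e^{\alpha}x^{\beta}$ (multiplication adding exponents), $\partial_i(e^{\alpha}x^{\beta})=a_ie^{\alpha}x^{\beta}+b_ie^{\alpha}x^{\beta-\epsilon_i}$ with $a_i:=0$ for $i>n$, and bracket $[f\partial_i,g\partial_j]=f\partial_i(g)\partial_j-g\partial_j(f)\partial_i$. *)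

theory Defs
  imports Main
begin

text \<open>Basis index of W(n,m): a triple (alpha, beta, i) standing for
  e^alpha x^beta d_i.  alpha, beta are integer vectors encoded as functions
  nat => int (components 0..n-1 resp. 0..n+m-1, all other components 0);
  the derivation index i is 0-based, i < n+m.\<close>
type_synonym wbasis = "(nat \<Rightarrow> int) \<times> (nat \<Rightarrow> int) \<times> nat"

definition valid_basis :: "nat \<Rightarrow> nat \<Rightarrow> wbasis \<Rightarrow> bool" where
  "valid_basis n m k = (case k of (\<alpha>, \<beta>, i) \<Rightarrow>
     (\<forall>j\<ge>n. \<alpha> j = 0) \<and> (\<forall>j\<ge>n+m. \<beta> j = 0) \<and> i < n + m)"

definition Wnm :: "nat \<Rightarrow> nat \<Rightarrow> (wbasis \<Rightarrow> 'a::field) set" where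
  "Wnm n m = {c. finite {k. c k \<noteq> 0} \<and> (\<forall>k. c k \<noteq> 0 \<longrightarrow> valid_basis n m k)}"

definition unit_vec :: "nat \<Rightarrow> nat \<Rightarrow> int" where
  "unit_vec i = (\<lambda>j. if j = i then 1 else 0)"

definition single :: "wbasis \<Rightarrow> 'a::field \<Rightarrow> wbasis \<Rightarrow> 'a" where
  "single k c = (\<lambda>k'. if k' = k then c else 0)"

text \<open>Bracket of basis elements:
  [e^a x^b d_i, e^c x^d d_j]
    = c_i e^(a+c) x^(b+d) d_j + d_i e^(a+c) x^(b+d-eps_i) d_j
      - a_j e^(a+c) x^(b+d) d_i - b_j e^(a+c) x^(b+d-eps_j) d_i,
  where c_i = 0 for i >= n is automatic since c is supported on 0..n-1.\<close>
definition basis_bracket :: "wbasis \<Rightarrow> wbasis \<Rightarrow> wbasis \<Rightarrow> 'a::field" where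
  "basis_bracket p q = (case p of (\<alpha>, \<beta>, i) \<Rightarrow> case q of (\<gamma>, \<delta>, j) \<Rightarrow>
     (\<lambda>k. single (\<lambda>t. \<alpha> t + \<gamma> t, \<lambda>t. \<beta> t + \<delta> t, j) (of_int (\<gamma> i)) k
        + single (\<lambda>t. \<alpha> t + \<gamma> t, \<lambda>t. \<beta> t + \<delta> t - unit_vec i t, j) (of_int (\<delta> i)) k
        - single (\<lambda>t. \<alpha> t + \<gamma> t, \<lambda>t. \<beta> t + \<delta> t, i) (of_int (\<alpha> j)) k
        - single (\<lambda>t. \<alpha> t + \<gamma> t, \<lambda>t. \<beta> t + \<delta> t - unit_vec j t, i) (of_int (\<beta> j)) k))"

definition wbracket :: "(wbasis \<Rightarrow> 'a::field) \<Rightarrow> (wbasis \<Rightarrow> 'a) \<Rightarrow> wbasis \<Rightarrow> 'a" where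
  "wbracket x y = (\<lambda>k. \<Sum>p\<in>{p. x p \<noteq> 0}. \<Sum>q\<in>{q. y q \<noteq> 0}.
                        x p * y q * basis_bracket p q k)"

inductive_set ideal_gen :: "nat \<Rightarrow> nat \<Rightarrow> (wbasis \<Rightarrow> 'a::field) \<Rightarrow> (wbasis \<Rightarrow> 'a) set"
  for n m l where
  gen: "l \<in> ideal_gen n m l"
| add: "x \<in> ideal_gen n m l \<Longrightarrow> y \<in> ideal_gen n m l \<Longrightarrow> (\<lambda>k. x k + y k) \<in> ideal_gen n m l"
| smult: "x \<in> ideal_gen n m l \<Longrightarrow> (\<lambda>k. c * x k) \<in> ideal_gen n m l"
| brk: "x \<in> ideal_gen n m l \<Longrightarrow> w \<in> Wnm n m \<Longrightarrow> wbracket w x \<in> ideal_gen n m l"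

end

theory Submission
  imports Defs
begin

definition Aop :: "(wbasis \<Rightarrow> 'a::field) \<Rightarrow> nat \<Rightarrow> wbasis \<Rightarrow> 'a" where
  "Aop l j k = (\<Sum>q\<in>{q. l q \<noteq> 0}. case q of (g, d, s) \<Rightarrow>
      l q * (single (g, d, s) (of_int (g j)) k
           + single (g, \<lambda>t. d t - unit_vec j t, s) (of_int (d j)) k))"

definition Bop :: "(wbasis \<Rightarrow> 'a::field) \<Rightarrow> nat \<Rightarrow> wbasis \<Rightarrow> 'a" where
  "Bop l j k = (\<Sum>q\<in>{q. l q \<noteq> 0}. case q of (g, d, s) \<Rightarrow>
      l q * single (g, \<lambda>t. d t - unit_vec s t, j) 1 k)"

lemma shift_eq: "((\<lambda>t. (D t::int) + a t) = (\<lambda>t. D t + b t)) = (a = b)"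
  by (auto simp: fun_eq_iff)

lemma shift_eq2: "((\<lambda>t. (D t::int) + a t - u t) = (\<lambda>t. D t + b t)) = ((\<lambda>t. a t - u t) = b)"
  by (auto simp: fun_eq_iff)

lemma minus_unit_eq: "((\<lambda>t. (a t::int) - unit_vec j t) = b) = (a = (\<lambda>t. b t + unit_vec j t))"
  by (simp add: fun_eq_iff diff_eq_eq)

lemma minus_unit_eq': "(b = (\<lambda>t. (a t::int) - unit_vec j t)) = (a = (\<lambda>t. b t + unit_vec j t))"
  by (auto simp: fun_eq_iff algebra_simps)

lemma Aop_closed:
  fixes l :: "wbasis \<Rightarrow> 'a::field"
  assumes "l \<in> Wnm n m"
  shows "Aop l j (\<gamma>, \<eta>, s) = l (\<gamma>, \<eta>, s) * of_int (\<gamma> j)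
           + l (\<gamma>, \<lambda>t. \<eta> t + unit_vec j t, s) * of_int (\<eta> j + 1)"
proof -
  let ?S = "{q. l q \<noteq> 0}"
  have fin: "finite ?S" using assms by (simp add: Wnm_def)
  let ?k1 = "(\<gamma>, \<eta>, s)" and ?k2 = "(\<gamma>, \<lambda>t. \<eta> t + unit_vec j t, s)"
  have pt: "(case q of (g, d, s') \<Rightarrow>
      l q * (single (g, d, s') (of_int (g j)) (\<gamma>, \<eta>, s)
           + single (g, \<lambda>t. d t - unit_vec j t, s') (of_int (d j)) (\<gamma>, \<eta>, s)))
     = (if q = ?k1 then l ?k1 * of_int (\<gamma> j) else 0)
     + (if q = ?k2 then l ?k2 * of_int (\<eta> j + 1) else 0)" for q
  proof (cases q)
    case (fields g d s')
    have u: "unit_vec j j = 1" by (simp add: unit_vec_def)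
    show ?thesis unfolding fields single_def
      by (simp add: minus_unit_eq' distrib_left u)
  qed
  have "Aop l j (\<gamma>, \<eta>, s) = (\<Sum>q\<in>?S. (if q = ?k1 then l ?k1 * of_int (\<gamma> j) else 0)
     + (if q = ?k2 then l ?k2 * of_int (\<eta> j + 1) else 0))"
    unfolding Aop_def using pt by (intro sum.cong) auto
  also have "\<dots> = l ?k1 * of_int (\<gamma> j) + l ?k2 * of_int (\<eta> j + 1)"
    by (simp add: sum.distrib fin)
  finally show ?thesis .
qed

lemma shift_eq3: "((\<lambda>t. (D t::int) + b t) = (\<lambda>t. D t + a t - u t)) = (b = (\<lambda>t. a t - u t))"
  by (auto simp: fun_eq_iff algebra_simps)

definition Dv :: "nat \<Rightarrow> nat \<Rightarrow> nat \<Rightarrow> nat \<Rightarrow> int" where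
  "Dv n m N = (\<lambda>t. if t < n + m then int N else 0)"

lemma wbracket_single:
  fixes l :: "wbasis \<Rightarrow> 'a::field"
  shows "wbracket (single p0 1) l k = (\<Sum>q\<in>{q. l q \<noteq> 0}. l q * basis_bracket p0 q k)"
proof -
  have "{p. single p0 (1::'a) p \<noteq> 0} = {p0}" by (auto simp: single_def)
  then show ?thesis unfolding wbracket_def by (simp add: single_def)
qed

lemma bb_formula:
  assumes "s < n + m"
  shows "(basis_bracket ((\<lambda>_. 0), Dv n m N, j) (g, d, s) k :: 'a::field) =
     single (g, \<lambda>t. Dv n m N t + d t, s) (of_int (g j)) k
   + single (g, \<lambda>t. Dv n m N t + d t - unit_vec j t, s) (of_int (d j)) k
   - single (g, \<lambda>t. Dv n m N t + d t - unit_vec s t, j) (of_nat N) k"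
  using assms by (simp add: basis_bracket_def single_def Dv_def)

lemma single_shift1:
  "single (g, \<lambda>t. (D t::int) + d t, s) c (\<gamma>, \<lambda>t. D t + \<eta> t, s') = single (g, d, s) c (\<gamma>, \<eta>, s')"
  by (simp add: single_def shift_eq)

lemma single_shift2:
  "single (g, \<lambda>t. (D t::int) + d t - u t, s) c (\<gamma>, \<lambda>t. D t + \<eta> t, s') = single (g, \<lambda>t. d t - u t, s) c (\<gamma>, \<eta>, s')"
  by (simp add: single_def shift_eq3)

lemma single_scale: "single x c k = c * single x 1 k"
  by (simp add: single_def)

lemma bracket_formula:
  fixes l :: "wbasis \<Rightarrow> 'a::field"
  assumes "l \<in> Wnm n m"
  shows "wbracket (single ((\<lambda>_. 0), Dv n m N, j) 1) l (\<gamma>, \<lambda>t. Dv n m N t + \<eta> t, s')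
     = Aop l j (\<gamma>, \<eta>, s') - of_nat N * Bop l j (\<gamma>, \<eta>, s')"
proof -
  let ?S = "{q. l q \<noteq> 0}"
  let ?k = "(\<gamma>, \<lambda>t. Dv n m N t + \<eta> t, s')"
  have pt: "l q * basis_bracket ((\<lambda>_. 0), Dv n m N, j) q ?k =
     (case q of (g, d, s) \<Rightarrow>
      l q * (single (g, d, s) (of_int (g j)) (\<gamma>, \<eta>, s')
           + single (g, \<lambda>t. d t - unit_vec j t, s) (of_int (d j)) (\<gamma>, \<eta>, s')))
     - of_nat N * (case q of (g, d, s) \<Rightarrow>
      l q * single (g, \<lambda>t. d t - unit_vec s t, j) 1 (\<gamma>, \<eta>, s'))"
    if "q \<in> ?S" for q
  proof (cases q)
    case (fields g d s)
    have "valid_basis n m q" using assms that fields by (auto simp: Wnm_def)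
    then have sl: "s < n + m" using fields by (simp add: valid_basis_def)
    show ?thesis unfolding fields bb_formula[OF sl]
      apply (simp only: single_shift1 single_shift2 prod.case)
      apply (subst single_scale[of _ "of_nat N"])
      by (simp add: algebra_simps)
  qed
  have "wbracket (single ((\<lambda>_. 0), Dv n m N, j) 1) l ?k
     = (\<Sum>q\<in>?S. (case q of (g, d, s) \<Rightarrow>
      l q * (single (g, d, s) (of_int (g j)) (\<gamma>, \<eta>, s')
           + single (g, \<lambda>t. d t - unit_vec j t, s) (of_int (d j)) (\<gamma>, \<eta>, s')))
     - of_nat N * (case q of (g, d, s) \<Rightarrow>
      l q * single (g, \<lambda>t. d t - unit_vec s t, j) 1 (\<gamma>, \<eta>, s')))"
    unfolding wbracket_single using pt by (intro sum.cong) auto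
  also have "\<dots> = Aop l j (\<gamma>, \<eta>, s') - of_nat N * Bop l j (\<gamma>, \<eta>, s')"
    unfolding Aop_def Bop_def by (simp add: sum_subtractf sum_distrib_left)
  finally show ?thesis .
qed

lemma positivity:
  fixes l :: "wbasis \<Rightarrow> 'a::field"
  assumes "l \<in> Wnm n m"
    and big: "\<forall>q\<in>{q. l q \<noteq> 0}. \<forall>t<n+m. \<bar>fst (snd q) t\<bar> + 2 \<le> int N"
    and nz: "wbracket (single ((\<lambda>_. 0), Dv n m N, j) 1) l (a, b, p) \<noteq> 0"
    and t: "t < n + m"
  shows "b t > 0"
proof -
  let ?S = "{q. l q \<noteq> 0}"
  from nz obtain q where q: "q \<in> ?S" and qn: "l q * basis_bracket ((\<lambda>_. 0), Dv n m N, j) q (a, b, p) \<noteq> (0::'a)"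
    using sum.not_neutral_contains_not_neutral[OF nz[unfolded wbracket_single]] by blast
  obtain g d s where fields: "q = (g, d, s)" by (cases q)
  have "valid_basis n m q" using assms q fields by (auto simp: Wnm_def)
  then have sl: "s < n + m" using fields by (simp add: valid_basis_def)
  have bn: "basis_bracket ((\<lambda>_. 0), Dv n m N, j) (g, d, s) (a, b, p) \<noteq> (0::'a)"
    using qn fields by simp
  have dt: "\<bar>d t\<bar> + 2 \<le> int N" using big q t unfolding fields by fastforce
  have u: "unit_vec i t \<le> 1" for i by (simp add: unit_vec_def)
  have D: "Dv n m N t = int N" using t by (simp add: Dv_def)
  have "b = (\<lambda>t. Dv n m N t + d t) \<or> b = (\<lambda>t. Dv n m N t + d t - unit_vec j t)
      \<or> b = (\<lambda>t. Dv n m N t + d t - unit_vec s t)"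
    using bn unfolding bb_formula[OF sl] by (auto simp: single_def split: if_splits)
  then show ?thesis using dt u[of j] u[of s] D by auto
qed

lemma deriv_zero:
  fixes l :: "wbasis \<Rightarrow> 'a::field_char_0"
  assumes fin: "finite {k. l k \<noteq> 0}"
    and H: "\<And>\<gamma> \<eta> s. l (\<gamma>, \<eta>, s) * of_int (\<gamma> j) + l (\<gamma>, \<lambda>t. \<eta> t + unit_vec j t, s) * of_int (\<eta> j + 1) = 0"
    and nz: "l (\<gamma>, \<eta>, s) \<noteq> 0"
  shows "\<gamma> j = 0 \<and> \<eta> j = 0"
proof (cases "\<gamma> j = 0")
  case True
  show ?thesis
  proof (rule ccontr)
    assume "\<not> (\<gamma> j = 0 \<and> \<eta> j = 0)"
    then have ne: "\<eta> j \<noteq> 0" using True by simp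
    define \<eta>' where "\<eta>' = (\<lambda>t. \<eta> t - unit_vec j t)"
    have e1: "(\<lambda>t. \<eta>' t + unit_vec j t) = \<eta>" by (simp add: \<eta>'_def)
    have e2: "\<eta>' j + 1 = \<eta> j" by (simp add: \<eta>'_def unit_vec_def)
    from H[of \<gamma> \<eta>' s] have "l (\<gamma>, \<eta>, s) * of_int (\<eta> j) = 0"
      unfolding e1 e2 True by simp
    with nz ne show False by simp
  qed
next
  case False
  define c where "c k = (\<gamma>, \<lambda>t. \<eta> t + int k * unit_vec j t, s)" for k :: nat
  have allnz: "l (c k) \<noteq> 0" for k
  proof (induction k)
    case 0
    then show ?case using nz by (simp add: c_def)
  next
    case (Suc k)
    have e: "(\<lambda>t. (\<eta> t + int k * unit_vec j t) + unit_vec j t) = (\<lambda>t. \<eta> t + int (Suc k) * unit_vec j t)"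
      by (auto simp: fun_eq_iff algebra_simps)
    from H[of \<gamma> "\<lambda>t. \<eta> t + int k * unit_vec j t" s]
    have eq: "l (c k) * of_int (\<gamma> j) + l (c (Suc k)) * of_int (\<eta> j + int k * unit_vec j j + 1) = 0"
      unfolding c_def e by simp
    show ?case
    proof
      assume "l (c (Suc k)) = 0"
      with eq have "l (c k) * of_int (\<gamma> j) = 0" by simp
      then show False using Suc.IH False by simp
    qed
  qed
  have inj: "inj c"
  proof (rule injI)
    fix x y assume "c x = c y"
    then have "fst (snd (c x)) j = fst (snd (c y)) j" by simp
    then have "\<eta> j + int x * unit_vec j j = \<eta> j + int y * unit_vec j j"
      unfolding c_def by simp
    then show "x = y" by (simp add: unit_vec_def)
  qed
  have "range c \<subseteq> {k. l k \<noteq> 0}" using allnz by auto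
  then have "finite (range c)" using fin finite_subset by blast
  then have "finite (UNIV :: nat set)" using inj finite_imageD by blast
  then show ?thesis by simp
qed

lemma uv_inj: "((\<lambda>t. - unit_vec a t) = (\<lambda>t. - unit_vec b t)) = (a = b)"
proof
  assume "(\<lambda>t. - unit_vec a t) = (\<lambda>t. - unit_vec b t)"
  then have "- unit_vec a a = - unit_vec b a" by metis
  then show "a = b" by (simp add: unit_vec_def split: if_splits)
qed simp

lemma main_j:
  fixes l :: "wbasis \<Rightarrow> 'a::field_char_0" and n m :: nat
  assumes lW: "l \<in> Wnm n m" and j: "j < n + m"
    and AB: "(\<exists>k. Aop l j k \<noteq> 0) \<or> (\<exists>k. Bop l j k \<noteq> 0)"
  shows "\<exists>l' \<in> ideal_gen n m l. l' \<noteq> (\<lambda>k. 0) \<and>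
           (\<forall>\<alpha> \<beta> p. l' (\<alpha>, \<beta>, p) \<noteq> 0 \<longrightarrow> (\<forall>j < n + m. \<beta> j > 0))"
proof -
  let ?S = "{q. l q \<noteq> 0}"
  have fin: "finite ?S" using lW by (simp add: Wnm_def)
  define N0 where "N0 = 2 + (\<Sum>q\<in>?S. \<Sum>t<n+m. nat \<bar>fst (snd q) t\<bar>)"
  have big: "\<forall>q\<in>?S. \<forall>t<n+m. \<bar>fst (snd q) t\<bar> + 2 \<le> int N" if "N0 \<le> N" for N
  proof (intro ballI allI impI)
    fix q t assume q: "q \<in> ?S" and t: "t < n + m"
    have "nat \<bar>fst (snd q) t\<bar> \<le> (\<Sum>t<n+m. nat \<bar>fst (snd q) t\<bar>)"
      using t by (intro member_le_sum) auto
    also have "\<dots> \<le> (\<Sum>q\<in>?S. \<Sum>t<n+m. nat \<bar>fst (snd q) t\<bar>)"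
      using q fin by (intro member_le_sum) auto
    finally show "\<bar>fst (snd q) t\<bar> + 2 \<le> int N" using that unfolding N0_def by linarith
  qed
  have "\<exists>N\<ge>N0. \<exists>\<gamma> \<eta> s. Aop l j (\<gamma>, \<eta>, s) - of_nat N * Bop l j (\<gamma>, \<eta>, s) \<noteq> 0"
  proof (rule ccontr)
    assume "\<not> ?thesis"
    then have z: "\<And>N \<gamma> \<eta> s. N0 \<le> N \<Longrightarrow> Aop l j (\<gamma>, \<eta>, s) = of_nat N * Bop l j (\<gamma>, \<eta>, s)"
      by auto
    have B0: "Bop l j k = 0" for k
    proof (cases k)
      case (fields g d s)
      from z[of N0 g d s] z[of "Suc N0" g d s] show ?thesis unfolding fields
        by (simp add: algebra_simps)
    qed
    have A0: "Aop l j k = 0" for k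
    proof (cases k)
      case (fields g d s)
      from z[of N0 g d s] B0[of k] show ?thesis unfolding fields by simp
    qed
    from AB A0 B0 show False by blast
  qed
  then obtain N \<gamma> \<eta> s where N: "N0 \<le> N"
    and nz: "Aop l j (\<gamma>, \<eta>, s) - of_nat N * Bop l j (\<gamma>, \<eta>, s) \<noteq> 0" by blast
  define w :: "wbasis \<Rightarrow> 'a" where "w = single ((\<lambda>_. 0), Dv n m N, j) 1"
  have wW: "w \<in> Wnm n m"
  proof -
    have e: "{k. w k \<noteq> 0} = {((\<lambda>_. 0), Dv n m N, j)}" by (auto simp: w_def single_def)
    have v: "valid_basis n m ((\<lambda>_. 0), Dv n m N, j)"
      using j by (simp add: valid_basis_def Dv_def)
    have "\<forall>k. w k \<noteq> 0 \<longrightarrow> valid_basis n m k" using v by (simp add: w_def single_def)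
    then show ?thesis unfolding Wnm_def using e by simp
  qed
  define l' where "l' = wbracket w l"
  have "l' \<in> ideal_gen n m l" unfolding l'_def using wW by (intro ideal_gen.brk ideal_gen.gen)
  moreover have "l' \<noteq> (\<lambda>k. 0)"
  proof
    assume "l' = (\<lambda>k. 0)"
    then have "l' (\<gamma>, \<lambda>t. Dv n m N t + \<eta> t, s) = 0" by simp
    then show False using nz unfolding l'_def w_def bracket_formula[OF lW] by simp
  qed
  moreover have "\<forall>\<alpha> \<beta> p. l' (\<alpha>, \<beta>, p) \<noteq> 0 \<longrightarrow> (\<forall>j < n + m. \<beta> j > 0)"
    using positivity[OF lW big[OF N]] unfolding l'_def w_def by blast
  ultimately show ?thesis by blast
qed

theorem lemma1:
  fixes l :: "wbasis \<Rightarrow> 'a::field_char_0" and n m :: nat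
  assumes "l \<in> Wnm n m" and "l \<noteq> (\<lambda>k. 0)"
  shows "\<exists>l' \<in> ideal_gen n m l. l' \<noteq> (\<lambda>k. 0) \<and>
           (\<forall>\<alpha> \<beta> p. l' (\<alpha>, \<beta>, p) \<noteq> 0 \<longrightarrow> (\<forall>j < n + m. \<beta> j > 0))"
proof -
  let ?S = "{q. l q \<noteq> 0}"
  have fin: "finite ?S" using assms(1) by (simp add: Wnm_def)
  have valid: "valid_basis n m q" if "l q \<noteq> 0" for q
    using assms(1) that unfolding Wnm_def by (cases q) auto
  obtain g0 d0 s0 where k0: "l (g0, d0, s0) \<noteq> 0" using assms(2) by (metis prod_cases3)
  have s0: "s0 < n + m" using valid[OF k0] by (simp add: valid_basis_def)
  show ?thesis
  proof (cases "\<exists>j<n+m. \<exists>k. Aop l j k \<noteq> 0")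
    case True
    then obtain j where "j < n + m" "\<exists>k. Aop l j k \<noteq> 0" by blast
    then show ?thesis using main_j[OF assms(1)] by blast
  next
    case False
    have const: "g = (\<lambda>_. 0) \<and> d = (\<lambda>_. 0)" if "l (g, d, s) \<noteq> 0" for g d s
    proof -
      have gd: "g t = 0 \<and> d t = 0" if t: "t < n + m" for t
      proof (rule deriv_zero[OF fin _ \<open>l (g, d, s) \<noteq> 0\<close>])
        fix \<gamma> \<eta> s'
        show "l (\<gamma>, \<eta>, s') * of_int (\<gamma> t) + l (\<gamma>, \<lambda>ta. \<eta> ta + unit_vec t ta, s') * of_int (\<eta> t + 1) = 0"
          using False t Aop_closed[OF assms(1), of t \<gamma> \<eta> s'] by auto
      qed
      have vg: "\<forall>j\<ge>n. g j = 0" and vd: "\<forall>j\<ge>n+m. d j = 0"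
        using valid[OF that] by (auto simp: valid_basis_def)
      have "g t = 0" for t
      proof (cases "t < n + m")
        case True then show ?thesis using gd by blast
      next
        case False then have "t \<ge> n" by linarith
        then show ?thesis using vg by blast
      qed
      moreover have "d t = 0" for t
      proof (cases "t < n + m")
        case True then show ?thesis using gd by blast
      next
        case False then show ?thesis using vd by simp
      qed
      ultimately show ?thesis by (simp add: fun_eq_iff)
    qed
    have l0: "l ((\<lambda>_. 0), (\<lambda>_. 0), s0) \<noteq> 0" using k0 const[OF k0] by simp
    let ?q0 = "((\<lambda>_. 0::int), (\<lambda>_. 0::int), s0)"
    have "Bop l 0 ((\<lambda>_. 0), (\<lambda>t. - unit_vec s0 t), 0)
        = (\<Sum>q\<in>?S. if q = ?q0 then l q else 0)"
      unfolding Bop_def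
    proof (rule sum.cong[OF refl])
      fix q assume "q \<in> ?S"
      then obtain s where q: "q = ((\<lambda>_. 0), (\<lambda>_. 0), s)" using const by (cases q) auto
      show "(case q of (g, d, s) \<Rightarrow> l q * single (g, \<lambda>t. d t - unit_vec s t, 0) 1 ((\<lambda>_. 0), (\<lambda>t. - unit_vec s0 t), 0))
         = (if q = ?q0 then l q else 0)"
        unfolding q by (simp add: single_def uv_inj)
    qed
    also have "\<dots> = l ?q0" using fin l0 by simp
    finally have "Bop l 0 ((\<lambda>_. 0), (\<lambda>t. - unit_vec s0 t), 0) \<noteq> 0" using l0 by simp
    then have "\<exists>k. Bop l 0 k \<noteq> 0" by blast
    moreover have "0 < n + m" using s0 by linarith
    ultimately show ?thesis using main_j[OF assms(1), of 0] by blast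
  qed
qed

end
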